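(* For every $\eta>1$, $$\lim_{N\to\infty}\sum_{n=2}^N a_n\frac{(\eta-1)^n}{\eta^{n-1}}=G(\eta).$$
   Context: Let $g:(-\pi^2,\infty)\to(0,\infty)$, $g(r)=\sinh(\sqrt r)/\sqrt r$ for $r>0$, $g(0)=1$, $g(r)=\sin(\sqrt{-r})/\sqrt{-r}$ for $-\pi^2<r<0$; it is a strictly increasing bijection with inverse $g^{-1}$. For $\eta>0$ define $G(\eta)=2\eta-2\,\mathrm{sgn}\big(4g^{-1}(\eta^{-1})+\pi^2\big)\sqrt{\eta^2+g^{-1}(\eta^{-1})}+g^{-1}(\eta^{-1})$ (the sign equals $1$ for $\eta<\pi/2$, $0$ at $\eta=\pi/2$, $-1$ for $\eta>\pi/2$). The coefficients $a_n$, $n\ge2$, are determined recursively by requiring that for each $n\ge 2$ the $n$-th right derivative at $\eta=1$ of $G$ equals that of $\sum_{k=2}^n a_k(\eta-1)^k/\eta^{k-1}$; equivalently, $a_n$ is the $n$-th Taylor coefficient at $\xi=0$ of $F(\xi)=(1-\xi)G\big(\frac1{1-\xi}\big)$ (so that $F(\xi)=\sum_{n\ge2}a_n\xi^n$ near $0$). *)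

theory Defs
  imports "HOL-Analysis.Analysis"
begin

definition gfun :: "real \<Rightarrow> real" where
  "gfun r = (if r > 0 then sinh (sqrt r) / sqrt r
             else if r = 0 then 1
             else sin (sqrt (- r)) / sqrt (- r))"

definition ginv :: "real \<Rightarrow> real" where
  "ginv y = (THE r. - (pi\<^sup>2) < r \<and> gfun r = y)"

definition Gfun :: "real \<Rightarrow> real" where
  "Gfun \<eta> = 2 * \<eta> - 2 * sgn (4 * ginv (1 / \<eta>) + pi\<^sup>2) * sqrt (\<eta>\<^sup>2 + ginv (1 / \<eta>))
             + ginv (1 / \<eta>)"

definition Ffun :: "real \<Rightarrow> real" where
  "Ffun \<xi> = (1 - \<xi>) * Gfun (1 / (1 - \<xi>))"

definition acoef :: "nat \<Rightarrow> real" where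
  "acoef n = (deriv ^^ n) Ffun 0 / fact n"

end

theory Submission
  imports Defs "HOL-Complex_Analysis.Complex_Analysis"
begin


lemma Ln_noshiro:
  fixes u v :: complex
  assumes u: "Re u > 0" and v: "Re v > 0" and uv: "u \<noteq> v"
  shows "Re ((Ln u - Ln v) * cnj (u - v)) > 0"
proof -
  define d where "d = u - v"
  have d0: "d \<noteq> 0" using uv d_def by auto
  define \<gamma> where "\<gamma> t = v + of_real t * d" for t
  have Rg: "Re (\<gamma> t) > 0" if "0 \<le> t" "t \<le> 1" for t
  proof -
    have "Re (\<gamma> t) = (1 - t) * Re v + t * Re u" by (simp add: \<gamma>_def d_def algebra_simps)
    also have "\<dots> > 0"
    proof (cases "t = 0")
      case True thus ?thesis using v by simp
    next
      case False
      hence "t > 0" using that by simp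
      hence "t * Re u > 0" using u by simp
      moreover have "(1 - t) * Re v \<ge> 0" using that v by simp
      ultimately show ?thesis by linarith
    qed
    finally show ?thesis .
  qed
  define \<phi> where "\<phi> t = Re (Ln (\<gamma> t) * cnj d)" for t
  have der: "(\<phi> has_real_derivative Re (d / \<gamma> t * cnj d)) (at t)" if "0 \<le> t" "t \<le> 1" for t
  proof -
    have nn: "\<gamma> t \<notin> \<real>\<^sub>\<le>\<^sub>0" using Rg[OF that] by (auto simp: complex_nonpos_Reals_iff)
    have "((\<lambda>z. Ln (v + z * d) * cnj d) has_field_derivative (d / \<gamma> t * cnj d)) (at (of_real t))"
      using nn unfolding \<gamma>_def
      by (auto intro!: derivative_eq_intros simp: field_simps)
    from has_vector_derivative_real_field[OF this]
    have "((\<lambda>x. Ln (v + of_real x * d) * cnj d) has_vector_derivative (d / \<gamma> t * cnj d)) (at t)" .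
    from has_field_derivative_Re[OF this] show ?thesis unfolding \<phi>_def \<gamma>_def .
  qed
  have pos: "Re (d / \<gamma> t * cnj d) > 0" if "0 \<le> t" "t \<le> 1" for t
  proof -
    have dd: "d * cnj d = of_real ((cmod d)^2)" by (rule complex_norm_square[symmetric])
    have "d / \<gamma> t * cnj d = (d * cnj d) / \<gamma> t" by simp
    also have "\<dots> = of_real ((cmod d)^2) / \<gamma> t" by (simp only: dd)
    also have "Re \<dots> = (cmod d)^2 * Re (\<gamma> t) / (cmod (\<gamma> t))^2"
      by (simp add: Re_divide cmod_power2)
    also have "\<dots> > 0" using Rg[OF that] d0 by (auto intro!: divide_pos_pos)
    finally show ?thesis .
  qed
  obtain z where z: "0 < z" "z < 1" "\<phi> 1 - \<phi> 0 = (1 - 0) * Re (d / \<gamma> z * cnj d)"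
    using MVT2[of 0 1 \<phi> "\<lambda>t. Re (d / \<gamma> t * cnj d)"] der by force
  have "\<phi> 1 - \<phi> 0 > 0" using z pos[of z] by simp
  moreover have "\<phi> 1 - \<phi> 0 = Re ((Ln u - Ln v) * cnj (u - v))"
    by (simp add: \<phi>_def \<gamma>_def d_def algebra_simps)
  ultimately show ?thesis by simp
qed



definition ck :: "nat \<Rightarrow> real" where "ck k = (real (Suc k) * pi)^2"
definition ell :: "nat \<Rightarrow> complex \<Rightarrow> complex" where "ell k r = Ln (1 + r / complex_of_real (ck k))"
definition HH :: "complex set" where "HH = {r. Re r > - (pi^2)}"
definition LL :: "complex \<Rightarrow> complex" where "LL r = (\<Sum>k. ell k r)"
definition LLd :: "complex \<Rightarrow> complex" where "LLd r = (\<Sum>k. 1 / (complex_of_real (ck k) + r))"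
definition gc :: "complex \<Rightarrow> complex" where "gc r = exp (LL r)"

lemma ck_ge: "ck k \<ge> pi^2"
proof -
  have "real (Suc k) * pi \<ge> 1 * pi" by (intro mult_right_mono) auto
  hence "(real (Suc k) * pi)^2 \<ge> pi^2" by (intro power_mono) auto
  thus ?thesis by (simp add: ck_def)
qed

lemma ck_pos: "ck k > 0" using ck_ge[of k] pi_gt3 by (smt (verit) zero_less_power)

lemma open_HH: "open HH" unfolding HH_def by (rule open_halfspace_Re_gt)
lemma convex_HH: "convex HH" unfolding HH_def by (rule convex_halfspace_Re_gt)

lemma HH_Re: assumes "r \<in> HH" shows "Re (1 + r / complex_of_real (ck k)) > 0"
proof -
  have c: "ck k > 0" by (rule ck_pos)
  have "Re (1 + r / complex_of_real (ck k)) = 1 + Re r / ck k" by (simp add: Re_divide_of_real)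
  moreover have "Re r > - ck k" using assms ck_ge[of k] by (simp add: HH_def)
  hence "Re r / ck k > -1" using c by (simp add: field_simps)
  ultimately show ?thesis by simp
qed

lemma HH_Re2: assumes "r \<in> HH" shows "Re (complex_of_real (ck k) + r) > 0"
  using assms ck_ge[of k] by (simp add: HH_def)

lemma ell_deriv: assumes "r \<in> HH"
  shows "(ell k has_field_derivative 1 / (complex_of_real (ck k) + r)) (at r)"
proof -
  have nn: "1 + r / complex_of_real (ck k) \<notin> \<real>\<^sub>\<le>\<^sub>0"
    using HH_Re[OF assms, of k] by (auto simp: complex_nonpos_Reals_iff)
  have c: "complex_of_real (ck k) \<noteq> 0" using ck_pos[of k] by simp
  have h: "Re (complex_of_real (ck k) + r) > 0" by (rule HH_Re2[OF assms])
  have ne: "complex_of_real (ck k) + r \<noteq> 0"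
  proof
    assume "complex_of_real (ck k) + r = 0"
    hence "Re (complex_of_real (ck k) + r) = 0" by simp
    with h show False by simp
  qed
  show ?thesis unfolding ell_def
    using nn c ne by (auto intro!: derivative_eq_intros simp: field_simps)
qed

lemma LL_series:
  "\<exists>g g'. \<forall>x \<in> HH. ((\<lambda>n. ell n x) sums g x) \<and> ((\<lambda>n. 1 / (complex_of_real (ck n) + x)) sums g' x)
     \<and> (g has_field_derivative g' x) (at x)"
proof (rule series_and_derivative_comparison_local[OF open_HH])
  show "\<And>n x. x \<in> HH \<Longrightarrow> (ell n has_field_derivative 1 / (complex_of_real (ck n) + x)) (at x)"
    by (rule ell_deriv)
  fix x assume x: "x \<in> HH"
  define M where "M = cmod x + 1"
  have M0: "M \<ge> 1" by (simp add: M_def)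
  define h where "h n = 2 * M / pi^2 * (1 / (real n + 1)^2)" for n
  have "summable (\<lambda>n. 1 / (real n + 1)^2)"
    using inverse_squares_sums by (simp add: sums_iff add.commute)
  hence sh: "summable h" unfolding h_def by (rule summable_mult)
  have ev: "\<forall>\<^sub>F n in sequentially. \<forall>y\<in>ball x 1 \<inter> HH. cmod (ell n y) \<le> h n"
  proof (rule eventually_sequentiallyI[of "nat \<lceil>M\<rceil>"])
    fix n assume n: "nat \<lceil>M\<rceil> \<le> n"
    hence nM: "real n + 1 > M" by linarith
    show "\<forall>y\<in>ball x 1 \<inter> HH. cmod (ell n y) \<le> h n"
    proof
      fix y assume y: "y \<in> ball x 1 \<inter> HH"
      have ny: "cmod y \<le> M" using y unfolding M_def
        by (smt (verit) dist_norm mem_ball Int_iff norm_triangle_ineq2 dist_commute)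
      have ckn: "ck n = (real n + 1)^2 * pi^2" by (simp add: ck_def power_mult_distrib)
      have ckp: "ck n > 0" by (rule ck_pos)
      have "cmod (y / complex_of_real (ck n)) = cmod y / ck n" using ckp by (simp add: norm_divide)
      also have "\<dots> \<le> M / ck n" using ny ckp by (simp add: divide_right_mono)
      finally have le1: "cmod (y / complex_of_real (ck n)) \<le> M / ck n" .
      have "(real n + 1)^2 * pi^2 \<ge> (real n + 1) * 9"
      proof -
        have "(real n + 1)^2 \<ge> real n + 1" by (simp add: power2_eq_square)
        moreover have "pi^2 \<ge> 9"
        proof -
          have "pi^2 \<ge> 3^2" by (rule power_mono) (use pi_gt3 in auto)
          thus ?thesis by simp
        qed
        ultimately show ?thesis by (intro mult_mono) auto
      qed
      hence "ck n > 2 * M" using nM M0 ckn by (smt (verit))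
      hence "M / ck n < 1/2" using ckp by (simp add: field_simps)
      hence "cmod (ell n y) \<le> 2 * cmod (y / complex_of_real (ck n))"
        unfolding ell_def using le1 by (intro norm_Ln_le) linarith
      also have "\<dots> \<le> 2 * (M / ck n)" using le1 by simp
      also have "\<dots> = h n" by (simp add: h_def ckn)
      finally show "cmod (ell n y) \<le> h n" .
    qed
  qed
  show "\<exists>d h. 0 < d \<and> summable h \<and> (\<forall>\<^sub>F n in sequentially. \<forall>y\<in>ball x d \<inter> HH. cmod (ell n y) \<le> h n)"
    using sh ev by (intro exI[of _ 1] exI[of _ h]) auto
qed

lemma LL_props:
  assumes "x \<in> HH"
  shows "(\<lambda>n. ell n x) sums LL x" "(\<lambda>n. 1 / (complex_of_real (ck n) + x)) sums LLd x"
        "(LL has_field_derivative LLd x) (at x)"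
proof -
  obtain g g' where gg: "\<forall>x \<in> HH. ((\<lambda>n. ell n x) sums g x) \<and> ((\<lambda>n. 1 / (complex_of_real (ck n) + x)) sums g' x)
     \<and> (g has_field_derivative g' x) (at x)" using LL_series by blast
  have eq: "g y = LL y" if "y \<in> HH" for y using gg that unfolding LL_def by (metis sums_unique)
  have eq': "g' y = LLd y" if "y \<in> HH" for y using gg that unfolding LLd_def by (metis sums_unique)
  show "(\<lambda>n. ell n x) sums LL x" using gg assms eq by metis
  show "(\<lambda>n. 1 / (complex_of_real (ck n) + x)) sums LLd x" using gg assms eq' by metis
  have "(g has_field_derivative LLd x) (at x)" using gg assms eq' by metis
  thus "(LL has_field_derivative LLd x) (at x)"
    using has_field_derivative_transform_within_open[of g "LLd x" x HH LL] open_HH assms eq by blast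
qed

lemma LL_holo: "LL holomorphic_on HH"
  using LL_props(3) open_HH by (auto simp: holomorphic_on_open field_differentiable_def)

lemma gc_holo: "gc holomorphic_on HH"
  unfolding gc_def by (intro holomorphic_intros LL_holo)



lemma re_pos_nz: "Re (z::complex) > 0 \<Longrightarrow> z \<noteq> 0" by auto

lemma LL_noshiro:
  assumes a: "a \<in> HH" and b: "b \<in> HH" and ab: "a \<noteq> b"
  shows "Re ((LL b - LL a) * cnj (b - a)) > 0"
proof -
  define t where "t k = Re ((ell k b - ell k a) * cnj (b - a))" for k
  have s: "(\<lambda>k. (ell k b - ell k a) * cnj (b - a)) sums ((LL b - LL a) * cnj (b - a))"
    by (intro sums_mult2 sums_diff LL_props(1) a b)
  hence st: "t sums Re ((LL b - LL a) * cnj (b - a))"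
    unfolding t_def sums_complex_iff by simp
  have tpos: "t k > 0" for k
  proof -
    define c where "c = ck k"
    have c: "c > 0" using ck_pos[of k] by (simp add: c_def)
    define u where "u = 1 + b / complex_of_real c"
    define v where "v = 1 + a / complex_of_real c"
    have u: "Re u > 0" using HH_Re[OF b, of k] by (simp add: u_def c_def)
    have v: "Re v > 0" using HH_Re[OF a, of k] by (simp add: v_def c_def)
    have uv: "u \<noteq> v" using ab c by (auto simp: u_def v_def)
    have "cnj (b - a) = complex_of_real c * cnj (u - v)"
      using c by (simp add: u_def v_def field_simps)
    moreover have e: "ell k b - ell k a = Ln u - Ln v" by (simp add: ell_def u_def v_def c_def)
    ultimately have "t k = Re ((Ln u - Ln v) * (complex_of_real c * cnj (u - v)))"
      by (simp only: t_def)
    also have "\<dots> = c * Re ((Ln u - Ln v) * cnj (u - v))"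
      by (simp add: mult.left_commute[of _ "complex_of_real c"])
    also have "\<dots> > 0" using c Ln_noshiro[OF u v uv] by simp
    finally show ?thesis .
  qed
  show ?thesis using suminf_pos[of t] st tpos by (simp add: sums_iff)
qed

lemma LL_inj: "inj_on LL HH"
proof (rule inj_onI)
  fix a b assume a: "a \<in> HH" and b: "b \<in> HH" and e: "LL a = LL b"
  show "a = b"
  proof (rule ccontr)
    assume "a \<noteq> b"
    from LL_noshiro[OF a b this] e show False by simp
  qed
qed

lemma zero_HH: "0 \<in> HH" by (simp add: HH_def)

lemma LL_0: "LL 0 = 0"
  unfolding LL_def ell_def by simp

lemma gc_0: "gc 0 = 1" by (simp add: gc_def LL_0)

lemma gc_deriv: assumes "r \<in> HH" shows "(gc has_field_derivative gc r * LLd r) (at r)"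
  unfolding gc_def using LL_props(3)[OF assms] by (auto intro!: derivative_eq_intros)

lemma LLd_0: "LLd 0 = 1/6"
proof -
  have "(\<lambda>n. 1 / (complex_of_real (ck n) + 0)) sums LLd 0" by (rule LL_props(2)[OF zero_HH])
  moreover have "(\<lambda>n. 1 / (complex_of_real (ck n) + 0)) = (\<lambda>n. complex_of_real (1/pi^2 * (1 / (real n + 1)^2)))"
    by (auto simp: ck_def power_mult_distrib add.commute)
  moreover have "(\<lambda>n. 1/pi^2 * (1 / (real n + 1)^2)) sums (1/pi^2 * (pi^2/6))"
    by (intro sums_mult) (use inverse_squares_sums in \<open>simp add: add.commute\<close>)
  ultimately have "(\<lambda>n. complex_of_real (1/pi^2 * (1 / (real n + 1)^2))) sums LLd 0"
     "(\<lambda>n. complex_of_real (1/pi^2 * (1 / (real n + 1)^2))) sums complex_of_real (1/pi^2 * (pi^2/6))"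
    by (auto simp only: sums_of_real)
  hence "LLd 0 = complex_of_real (1/pi^2 * (pi^2/6))" using sums_unique2 by blast
  thus ?thesis by simp
qed

lemma gc_prod:
  assumes r: "r \<in> HH"
  shows "(\<lambda>n. \<Prod>k<n. (1 + r / complex_of_real (ck k))) \<longlonglongrightarrow> gc r"
proof -
  have "(\<lambda>n. \<Sum>k<n. ell k r) \<longlonglongrightarrow> LL r" using LL_props(1)[OF r] by (simp add: sums_def)
  hence "(\<lambda>n. exp (\<Sum>k<n. ell k r)) \<longlonglongrightarrow> gc r" unfolding gc_def by (intro tendsto_intros)
  moreover have "exp (\<Sum>k<n. ell k r) = (\<Prod>k<n. (1 + r / complex_of_real (ck k)))" for n
  proof -
    have "exp (\<Sum>k<n. ell k r) = (\<Prod>k<n. exp (ell k r))" by (simp add: exp_sum)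
    also have "\<dots> = (\<Prod>k<n. (1 + r / complex_of_real (ck k)))"
    proof (rule prod.cong[OF refl])
      fix k
      have "1 + r / complex_of_real (ck k) \<noteq> 0" using HH_Re[OF r, of k] re_pos_nz by blast
      thus "exp (ell k r) = 1 + r / complex_of_real (ck k)" by (simp add: ell_def)
    qed
    finally show ?thesis .
  qed
  ultimately show ?thesis by simp
qed

lemma gc_sinh:
  fixes q :: complex
  assumes q: "q \<noteq> 0" and r: "q^2 \<in> HH"
  shows "gc (q^2) = sinh q / q"
proof -
  define z where "z = \<i> * q / complex_of_real pi"
  have z0: "z \<noteq> 0" using q by (simp add: z_def)
  have pz: "complex_of_real pi * z = \<i> * q" by (simp add: z_def)
  have lim1: "(\<lambda>n. of_real pi * z * (\<Prod>k=1..n. 1 - z^2 / of_nat k^2)) \<longlonglongrightarrow> sin (of_real pi * z)"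
    by (rule sin_product_formula_complex)
  have "sin (of_real pi * z) = sin (\<i> * q)" by (simp only: pz)
  also have "\<dots> = \<i> * sinh q"
    by (simp add: sin_i_times sinh_def exp_minus scaleR_conv_of_real field_simps)
  finally have "sin (of_real pi * z) = \<i> * sinh q" .
  moreover have "(\<Prod>k=1..n. 1 - z^2 / of_nat k^2) = (\<Prod>k<n. (1 + q^2 / complex_of_real (ck k)))" for n
  proof -
    have "(\<Prod>k=1..n. 1 - z^2 / of_nat k^2) = (\<Prod>k<n. 1 - z^2 / of_nat (Suc k)^2)"
      using prod.shift_bounds_Suc_ivl[of "\<lambda>k. 1 - z^2 / of_nat k^2" 0 n]
      by (simp add: atLeastLessThanSuc_atLeastAtMost atLeast0LessThan)
    also have "\<dots> = (\<Prod>k<n. (1 + q^2 / complex_of_real (ck k)))"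
    proof (intro prod.cong refl)
      fix k
      have z2: "z^2 = -(q^2) / (complex_of_real pi)^2" by (simp add: z_def power_divide power_mult_distrib)
      have c: "complex_of_real (ck k) = (of_nat (Suc k))^2 * (complex_of_real pi)^2"
        by (simp add: ck_def power_mult_distrib)
      have p: "complex_of_real pi \<noteq> 0" by simp
      show "1 - z^2 / of_nat (Suc k)^2 = 1 + q^2 / complex_of_real (ck k)"
        unfolding z2 c using p by (simp add: field_simps del: of_nat_Suc)
    qed
    finally show ?thesis .
  qed
  ultimately have "(\<lambda>n. (\<i> * q) * (\<Prod>k<n. (1 + q^2 / complex_of_real (ck k)))) \<longlonglongrightarrow> \<i> * sinh q"
    using lim1 pz by simp
  from tendsto_divide[OF this tendsto_const[of "\<i> * q"]]
  have "(\<lambda>n. (\<i> * q) * (\<Prod>k<n. (1 + q^2 / complex_of_real (ck k))) / (\<i> * q)) \<longlonglongrightarrow> \<i> * sinh q / (\<i> * q)"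
    using q by simp
  hence "(\<lambda>n. (\<Prod>k<n. (1 + q^2 / complex_of_real (ck k)))) \<longlonglongrightarrow> sinh q / q"
    using q by simp
  with gc_prod[OF r] show ?thesis using LIMSEQ_unique by blast
qed



lemma sinh_lb:
  fixes x :: real assumes x: "x \<ge> 0"
  shows "sinh x \<ge> x + x^3/6 + x^5/120"
proof -
  let ?f = "\<lambda>n. if even n then 0 else x ^ n /\<^sub>R fact n"
  have s: "?f sums sinh x" by (rule sinh_converges)
  have "sum ?f {..<6} \<le> suminf ?f"
    by (rule sum_le_suminf) (use s x in \<open>auto simp: sums_iff\<close>)
  moreover have "sum ?f {..<6} = x + x^3/6 + x^5/120"
    by (simp add: lessThan_nat_numeral fact_numeral)
  ultimately show ?thesis using s by (simp add: sums_iff)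
qed

lemma E_nonneg:
  fixes a b :: real
  assumes a: "a \<ge> 0" and b: "b \<ge> 0" and ab: "b^2 = a^2 + pi^2"
  shows "2 * a * sinh a * cos b + 2 * b * cosh a * sin b \<le> (sinh a)^2 + (sin b)^2"
proof -
  have p3: "pi > 3" by (rule pi_gt3)
  have p4: "pi < 4" by (rule pi_less_4)
  have sa: "sinh a \<ge> 0" using a by simp
  have ca: "cosh a \<ge> 1" by (rule cosh_real_ge_1)
  have bpi: "b \<ge> pi"
  proof (rule ccontr)
    assume "\<not> b \<ge> pi" hence "b < pi" by simp
    hence "b^2 < pi^2" using b by (intro power_strict_mono) auto
    thus False using ab by (smt (verit) zero_le_power2)
  qed
  have slb: "sinh a \<ge> a + a^3/6 + a^5/120" by (rule sinh_lb[OF a])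
  show ?thesis
  proof (cases "b \<le> 3*pi/2")
    case True
    have "cos (b - pi) \<ge> 0" using True bpi by (intro cos_ge_zero) auto
    hence cb: "cos b \<le> 0" by simp
    have "sin (b - pi) \<ge> 0" using True bpi by (intro sin_ge_zero) auto
    hence sb: "sin b \<le> 0" by simp
    have "a * sinh a * cos b \<le> 0" using a sa cb by (simp add: mult_nonneg_nonpos)
    moreover have "b * cosh a * sin b \<le> 0" using b ca sb by (simp add: mult_nonneg_nonpos)
    moreover have "(sinh a)^2 \<ge> 0" "(sin b)^2 \<ge> 0" by simp_all
    ultimately show ?thesis by linarith
  next
    case False
    hence b32: "b > 3*pi/2" by simp
    have a2: "a^2 \<ge> 5*pi^2/4"
    proof -
      have "b^2 \<ge> (3*pi/2)^2" using b32 p3 by (intro power_mono) auto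
      thus ?thesis using ab by (simp add: power_mult_distrib power_divide)
    qed
    have pi2: "pi^2 > 9"
    proof -
      have "pi^2 > 3^2" using p3 by (intro power_strict_mono) auto
      thus ?thesis by simp
    qed
    show ?thesis
    proof (cases "b < 2*pi")
      case True
      have sb: "sin b \<le> 0" using True bpi by (intro sin_le_zero) auto
      have "a^3/6 \<ge> a * 11 / 6"
      proof -
        have "a^2 \<ge> 11" using a2 pi2 by linarith
        hence "a * a^2 \<ge> a * 11" using a by (intro mult_left_mono) auto
        thus ?thesis by (simp add: power3_eq_cube power2_eq_square mult.assoc)
      qed
      moreover have "a^5/120 \<ge> 0" using a by simp
      ultimately have s2: "sinh a \<ge> 2 * a" using slb a by linarith
      have "2 * a * sinh a * cos b \<le> 2*a* sinh a" using a sa by (simp add: mult_left_le)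
      also have "\<dots> \<le> sinh a * sinh a" using s2 sa by (simp add: mult_right_mono)
      finally have "2 * a * sinh a * cos b \<le> (sinh a)^2" by (simp add: power2_eq_square)
      moreover have "b * cosh a * sin b \<le> 0" using b ca sb by (simp add: mult_nonneg_nonpos)
      moreover have "(sinh a)^2 \<ge> 0" "(sin b)^2 \<ge> 0" by simp_all
    ultimately show ?thesis by linarith
    next
      case False
      hence b2: "b \<ge> 2*pi" by simp
      have a27: "a^2 \<ge> 27"
      proof -
        have "b^2 \<ge> (2*pi)^2" using b2 p3 by (intro power_mono) auto
        hence "a^2 \<ge> 3 * pi^2" using ab by (simp add: power_mult_distrib)
        thus ?thesis using pi2 by linarith
      qed
      have ba: "b \<le> a + 4"
      proof -
        have "b^2 \<le> (a + pi)^2" using ab a p3 by (simp add: power2_sum)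
        hence "b \<le> a + pi" using a p3 b by (simp add: power2_le_iff_abs_le)
        thus ?thesis using p4 by linarith
      qed
      have a3: "a^3/6 \<ge> 4.5 * a"
      proof -
        have "a * a^2 \<ge> a * 27" using a a27 by (intro mult_left_mono) auto
        thus ?thesis by (simp add: power3_eq_cube power2_eq_square mult.assoc)
      qed
      have a5: "a^5/120 \<ge> 6 * a"
      proof -
        have "(a^2)^2 \<ge> 27^2" using a27 by (intro power_mono) auto
        hence "a^4 \<ge> 27 * 27" by (simp add: power_mult[symmetric])
        hence "a * a^4 \<ge> a * 729" using a by (intro mult_left_mono) auto
        hence "a^5 \<ge> 729 * a" by (simp add: power_Suc[symmetric] mult.commute)
        thus ?thesis using a by linarith
      qed
      have a5': "a \<ge> 5"
      proof (rule ccontr)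
        assume "\<not> a \<ge> 5" hence "a < 5" by simp
        hence "a^2 < 5^2" using a by (intro power_strict_mono) auto
        thus False using a27 by simp
      qed
      have S: "sinh a \<ge> 4 * a + 10" using slb a3 a5 a5' by linarith
      have "2 * a * sinh a * cos b \<le> 2*a* sinh a" using a sa by (simp add: mult_left_le)
      moreover have "2 * b * cosh a * sin b \<le> 2*b*cosh a" using b ca by (simp add: mult_left_le)
      moreover have "cosh a \<le> sinh a + 1"
      proof -
        have "cosh a - sinh a = exp (-a)" by (rule cosh_minus_sinh)
        moreover have "exp (-a) \<le> 1" using a by simp
        ultimately show ?thesis by linarith
      qed
      hence "2 * b * cosh a \<le> 2*(a+4)*(sinh a + 1)"
        using ba b ca by (intro mult_mono) auto
      moreover have "2 * a * sinh a + 2*(a+4)*(sinh a + 1) \<le> (sinh a)^2"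
      proof -
        have "(sinh a)^2 \<ge> (4*a+10) * sinh a" using S sa by (simp add: power2_eq_square mult_right_mono)
        moreover have "a * sinh a \<ge> 0" using a sa by simp
        ultimately show ?thesis using S a by (simp add: algebra_simps)
      qed
      moreover have "(sinh a)^2 \<ge> 0" "(sin b)^2 \<ge> 0" by simp_all
    ultimately show ?thesis by linarith
    qed
  qed
qed



lemma sinh_Re_Im:
  fixes q :: complex
  shows "Re (sinh q) = sinh (Re q) * cos (Im q)" "Im (sinh q) = cosh (Re q) * sin (Im q)"
  by (simp_all add: sinh_def cosh_def Re_exp Im_exp scaleR_conv_of_real field_simps)

lemma cosh_Re_Im:
  fixes q :: complex
  shows "Re (cosh q) = cosh (Re q) * cos (Im q)" "Im (cosh q) = sinh (Re q) * sin (Im q)"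
  by (simp_all add: sinh_def cosh_def Re_exp Im_exp scaleR_conv_of_real field_simps)

lemma norm_sinh_sq: "(cmod (sinh q))^2 = (sinh (Re q))^2 + (sin (Im q))^2"
proof -
  have "(cmod (sinh q))^2 = (sinh (Re q) * cos (Im q))^2 + (cosh (Re q) * sin (Im q))^2"
    by (simp add: cmod_power2 sinh_Re_Im)
  also have "\<dots> = (sinh (Re q))^2 + (sin (Im q))^2"
    by (simp add: power_mult_distrib cosh_square_eq cos_squared_eq algebra_simps)
  finally show ?thesis .
qed

lemma E_nonneg':
  fixes a b :: real
  assumes ab: "b^2 = a^2 + pi^2"
  shows "2 * a * sinh a * cos b + 2 * b * cosh a * sin b \<le> (sinh a)^2 + (sin b)^2"
proof -
  have "2 * \<bar>a\<bar> * sinh \<bar>a\<bar> * cos \<bar>b\<bar> + 2 * \<bar>b\<bar> * cosh \<bar>a\<bar> * sin \<bar>b\<bar> \<le> (sinh \<bar>a\<bar>)^2 + (sin \<bar>b\<bar>)^2"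
    by (rule E_nonneg) (use ab in auto)
  moreover have "2 * \<bar>a\<bar> * sinh \<bar>a\<bar> * cos \<bar>b\<bar> = 2 * a * sinh a * cos b"
    by (cases "a \<ge> 0"; cases "b \<ge> 0") auto
  moreover have "2 * \<bar>b\<bar> * cosh \<bar>a\<bar> * sin \<bar>b\<bar> = 2 * b * cosh a * sin b"
    by (cases "a \<ge> 0"; cases "b \<ge> 0") auto
  moreover have "(sinh \<bar>a\<bar>)^2 = (sinh a)^2" by (cases "a \<ge> 0") auto
  moreover have "(sin \<bar>b\<bar>)^2 = (sin b)^2" by (cases "b \<ge> 0") auto
  ultimately show ?thesis by linarith
qed

lemma bdry_est:
  fixes q :: complex
  assumes "Re (q^2) = - (pi^2)"
  shows "cmod (sinh q - q) \<ge> cmod q"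
proof -
  define a where "a = Re q"
  define b where "b = Im q"
  have ab: "b^2 = a^2 + pi^2" using assms by (simp add: a_def b_def power2_eq_square)
  have "(cmod (sinh q - q))^2 = (sinh a * cos b - a)^2 + (cosh a * sin b - b)^2"
    by (simp add: cmod_power2 sinh_Re_Im a_def b_def)
  also have "\<dots> = (sinh a)^2 + (sin b)^2 + a^2 + b^2
      - (2 * a * sinh a * cos b + 2 * b * cosh a * sin b)"
    by (simp add: power2_diff power_mult_distrib cosh_square_eq cos_squared_eq algebra_simps)
  also have "\<dots> \<ge> a^2 + b^2" using E_nonneg'[OF ab] by linarith
  finally have "(cmod q)^2 \<le> (cmod (sinh q - q))^2" by (simp add: cmod_power2 a_def b_def)
  thus ?thesis by (simp add: power2_le_iff_abs_le)
qed

lemma growth_est: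
  fixes q :: complex
  assumes re: "Re (q^2) \<ge> - (pi^2)" and big: "cmod q \<ge> 7"
  shows "cmod (sinh q) \<ge> 2 * cmod q"
proof -
  define a where "a = Re q"
  define b where "b = Im q"
  define A where "A = \<bar>a\<bar>"
  have A0: "A \<ge> 0" by (simp add: A_def)
  have aA: "a^2 = A^2" by (simp add: A_def)
  have b2: "b^2 \<le> a^2 + pi^2" using re by (simp add: a_def b_def power2_eq_square)
  have q2: "(cmod q)^2 = a^2 + b^2" by (simp add: cmod_power2 a_def b_def)
  have "(cmod q)^2 \<ge> 7^2" using big by (intro power_mono) auto
  hence "49 \<le> 2 * A^2 + pi^2" using q2 b2 aA by simp
  moreover have "pi^2 < 4^2" using pi_less_4 pi_gt_zero by (intro power_strict_mono) auto
  ultimately have A16: "A^2 \<ge> (33/2)" by simp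
  have sl: "sinh A \<ge> A + A^3/6 + A^5/120" by (rule sinh_lb[OF A0])
  have t3: "A^3/6 \<ge> (11/4) * A"
  proof -
    have "A * A^2 \<ge> A * (33/2)" using A0 A16 by (intro mult_left_mono) auto
    thus ?thesis by (simp add: power3_eq_cube power2_eq_square mult.assoc)
  qed
  have t5: "A^5/120 \<ge> (9/4) * A"
  proof -
    have "(A^2)^2 \<ge> (33/2)^2" using A16 by (intro power_mono) auto
    hence "A^4 \<ge> (33/2)^2" by (simp add: power_mult[symmetric])
    moreover have "((33/2)::real)^2 \<ge> 272" by (simp add: power2_eq_square)
    ultimately have "A^4 \<ge> 272" by linarith
    hence "A * A^4 \<ge> A * 272" using A0 by (intro mult_left_mono) auto
    hence "A^5 \<ge> 272 * A" by (simp add: power_Suc[symmetric] mult.commute)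
    thus ?thesis using A0 by linarith
  qed
  have S: "sinh A \<ge> 5 * A" using sl t3 t5 A0 by linarith
  have "(sinh A)^2 \<ge> (5 * A)^2" using S A0 by (intro power_mono) auto
  hence "(sinh A)^2 \<ge> 4 * (2 * A^2 + 16)" using A16 by (simp add: power_mult_distrib)
  moreover have "(sinh A)^2 = (sinh a)^2" by (cases "a \<ge> 0") (auto simp: A_def)
  moreover have "(cmod (sinh q))^2 \<ge> (sinh a)^2" by (simp add: norm_sinh_sq a_def)
  moreover have "(2 * cmod q)^2 \<le> 4 * (2 * A^2 + 16)"
    using q2 b2 aA \<open>pi^2 < 4^2\<close> by (simp add: power_mult_distrib)
  ultimately have "(2 * cmod q)^2 \<le> (cmod (sinh q))^2" by linarith
  thus ?thesis using power2_le_iff_abs_le[of "cmod (sinh q)" "2 * cmod q"] by simp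
qed



lemma gc_far:
  assumes r: "r \<in> HH" and big: "cmod r \<ge> 49"
  shows "cmod (gc r - 1) \<ge> 1"
proof -
  define q where "q = csqrt r"
  have qr: "q^2 = r" by (simp add: q_def)
  have "(cmod q)^2 = cmod r" by (simp flip: qr add: norm_power)
  hence "(cmod q)^2 \<ge> 7^2" using big by simp
  hence q7: "cmod q \<ge> 7" using power2_le_iff_abs_le[of "cmod q" 7] by simp
  hence q0: "q \<noteq> 0" by auto
  have g: "gc r = sinh q / q" using gc_sinh[OF q0] r qr by simp
  have re: "Re (q^2) \<ge> - (pi^2)" using r qr by (simp add: HH_def)
  have s: "cmod (sinh q) \<ge> 2 * cmod q" by (rule growth_est[OF re q7])
  have "gc r - 1 = (sinh q - q) / q" using q0 by (simp add: g field_simps)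
  hence "cmod (gc r - 1) = cmod (sinh q - q) / cmod q" by (simp add: norm_divide)
  moreover have "cmod (sinh q - q) \<ge> cmod q"
    using s norm_triangle_ineq2[of "sinh q" q] by linarith
  ultimately show ?thesis using q0 by simp
qed

lemma gc_q: assumes "z^2 \<in> HH" shows "gc (z^2) = (if z = 0 then 1 else sinh z / z)"
  using gc_sinh[of z] assms gc_0 by auto

definition SS :: "complex set" where "SS = Ln ` ball 1 1"

lemma ball11_Re: "w \<in> ball 1 1 \<Longrightarrow> Re w > 0"
proof -
  assume "w \<in> ball 1 1"
  hence "cmod (1 - w) < 1" by (simp add: dist_norm)
  moreover have "\<bar>Re (1 - w)\<bar> \<le> cmod (1 - w)" by (rule abs_Re_le_cmod)
  ultimately show "Re w > 0" by auto
qed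

lemma Ln_holo_ball: "Ln holomorphic_on ball 1 1"
  by (intro holomorphic_intros) (auto dest!: ball11_Re simp: complex_nonpos_Reals_iff)

lemma open_SS: "open SS"
proof -
  have "inj_on Ln (ball 1 1)"
  proof (rule inj_onI)
    fix x y assume "x \<in> ball 1 1" "y \<in> ball 1 1" "Ln x = Ln y"
    hence "exp (Ln x) = exp (Ln y)" "x \<noteq> 0" "y \<noteq> 0" using ball11_Re by force+
    thus "x = y" by simp
  qed
  thus ?thesis unfolding SS_def by (intro open_mapping_thm3 Ln_holo_ball) auto
qed

lemma connected_SS: "connected SS"
  unfolding SS_def
  by (intro connected_continuous_image holomorphic_on_imp_continuous_on Ln_holo_ball) auto

lemma zero_SS: "0 \<in> SS"
proof -
  have "(1::complex) \<in> ball 1 1" by simp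
  hence "Ln 1 \<in> SS" unfolding SS_def by blast
  thus ?thesis by simp
qed

lemma open_LLHH: "open (LL ` HH)"
  by (rule open_mapping_thm3[OF LL_holo open_HH LL_inj])

lemma LL_cont: "continuous_on HH LL"
  by (rule holomorphic_on_imp_continuous_on[OF LL_holo])

lemma SS_exp: assumes "x \<in> SS" shows "exp x \<in> ball 1 1"
proof -
  obtain w where w: "w \<in> ball 1 1" "x = Ln w" using assms unfolding SS_def by blast
  have "w \<noteq> 0" using ball11_Re[OF w(1)] by auto
  thus ?thesis using w by simp
qed

lemma SS_closed_step:
  assumes x: "x \<in> SS" and lim: "x islimpt (SS \<inter> LL ` HH)"
  shows "x \<in> LL ` HH"
proof -
  obtain \<sigma> where \<sigma>: "\<And>n. \<sigma> n \<in> (SS \<inter> LL ` HH) - {x}" and \<sigma>x: "\<sigma> \<longlonglongrightarrow> x"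
    using lim unfolding islimpt_sequential by blast
  have "\<forall>n. \<exists>r. r \<in> HH \<and> \<sigma> n = LL r" using \<sigma> by blast
  then obtain rr where rr: "\<And>n. rr n \<in> HH" "\<And>n. \<sigma> n = LL (rr n)" by metis
  define w where "w = exp x"
  have w: "w \<in> ball 1 1" using SS_exp[OF x] by (simp add: w_def)
  have gl: "(\<lambda>n. gc (rr n)) \<longlonglongrightarrow> w"
  proof -
    have "(\<lambda>n. exp (\<sigma> n)) \<longlonglongrightarrow> w" unfolding w_def by (intro tendsto_intros \<sigma>x)
    thus ?thesis by (simp add: rr gc_def)
  qed
  have "\<forall>\<^sub>F n in sequentially. gc (rr n) \<in> ball 1 1"
    using gl w by (rule topological_tendstoD[OF _ open_ball])
  then obtain N where N: "\<And>n. n \<ge> N \<Longrightarrow> gc (rr n) \<in> ball 1 1"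
    by (auto simp: eventually_sequentially)
  have small: "cmod (rr n) < 49" if "n \<ge> N" for n
  proof (rule ccontr)
    assume "\<not> cmod (rr n) < 49"
    hence "cmod (gc (rr n) - 1) \<ge> 1" by (intro gc_far rr) auto
    moreover have "cmod (1 - gc (rr n)) < 1" using N[OF that] by (simp add: dist_norm)
    ultimately show False by (simp add: norm_minus_commute)
  qed
  define qq where "qq n = csqrt (rr (n + N))" for n
  have qq2: "(qq n)^2 = rr (n + N)" for n by (simp add: qq_def)
  have qqb: "qq n \<in> cball 0 7" for n
  proof -
    have "(cmod (qq n))^2 = cmod (rr (n + N))" by (simp flip: qq2 add: norm_power)
    also have "\<dots> < 7^2" using small[of "n + N"] by simp
    finally show ?thesis using power2_le_iff_abs_le[of 7 "cmod (qq n)"] by simp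
  qed
  obtain q s where q: "q \<in> cball 0 7" and s: "strict_mono s" and qs: "(qq \<circ> s) \<longlonglongrightarrow> q"
    using seq_compactE[OF compact_imp_seq_compact[OF compact_cball] ] qqb by metis
  have rs: "(\<lambda>n. rr (s n + N)) \<longlonglongrightarrow> q^2"
  proof -
    have "(\<lambda>n. ((qq \<circ> s) n)^2) \<longlonglongrightarrow> q^2" by (intro tendsto_intros qs)
    thus ?thesis by (simp add: qq2)
  qed
  have sig_s: "(\<lambda>n. \<sigma> (s n + N)) \<longlonglongrightarrow> x"
  proof -
    have "filterlim (\<lambda>n. s n + N) sequentially sequentially"
      using filterlim_subseq[OF s] by (rule filterlim_add_const_nat_at_top[THEN filterlim_compose])
    from filterlim_compose[OF \<sigma>x this] show ?thesis .
  qed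
  have gs: "(\<lambda>n. gc (rr (s n + N))) \<longlonglongrightarrow> w"
  proof -
    have "filterlim (\<lambda>n. s n + N) sequentially sequentially"
      using filterlim_subseq[OF s] by (rule filterlim_add_const_nat_at_top[THEN filterlim_compose])
    from filterlim_compose[OF gl this] show ?thesis .
  qed
  have reg: "Re (q^2) \<ge> - (pi^2)"
  proof (rule tendsto_lowerbound[OF tendsto_Re[OF rs]])
    show "\<forall>\<^sub>F n in sequentially. - (pi^2) \<le> Re (rr (s n + N))"
      using rr(1) by (auto simp: HH_def less_imp_le)
  qed simp
  show ?thesis
  proof (cases "Re (q^2) > - (pi^2)")
    case True
    hence qH: "q^2 \<in> HH" by (simp add: HH_def)
    have "(\<lambda>n. LL (rr (s n + N))) \<longlonglongrightarrow> LL (q^2)"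
    proof (rule continuous_on_tendsto_compose[OF LL_cont rs qH])
      show "\<forall>\<^sub>F n in sequentially. rr (s n + N) \<in> HH" using rr(1) by simp
    qed
    hence "(\<lambda>n. \<sigma> (s n + N)) \<longlonglongrightarrow> LL (q^2)" by (simp add: rr)
    hence "x = LL (q^2)" using sig_s LIMSEQ_unique by blast
    thus ?thesis using qH by blast
  next
    case False
    hence req: "Re (q^2) = - (pi^2)" using reg by simp
    hence q0: "q \<noteq> 0" by auto
    have "(\<lambda>n. sinh ((qq \<circ> s) n) / (qq \<circ> s) n) \<longlonglongrightarrow> sinh q / q"
      by (intro tendsto_intros qs q0)
    moreover have "\<forall>\<^sub>F n in sequentially. (qq \<circ> s) n \<noteq> 0"
      using qs q0 by (rule tendsto_imp_eventually_ne)
    hence "\<forall>\<^sub>F n in sequentially. sinh ((qq \<circ> s) n) / (qq \<circ> s) n = gc (rr (s n + N))"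
    proof (rule eventually_mono)
      fix n assume ne: "(qq \<circ> s) n \<noteq> 0"
      have "rr (s n + N) \<in> HH" by (rule rr)
      hence "gc (((qq \<circ> s) n)^2) = sinh ((qq \<circ> s) n) / (qq \<circ> s) n"
        using gc_q[of "(qq \<circ> s) n"] ne by (simp add: qq2)
      thus "sinh ((qq \<circ> s) n) / (qq \<circ> s) n = gc (rr (s n + N))" by (simp add: qq2)
    qed
    ultimately have "(\<lambda>n. gc (rr (s n + N))) \<longlonglongrightarrow> sinh q / q"
      by (rule Lim_transform_eventually)
    hence wq: "w = sinh q / q" using gs LIMSEQ_unique by blast
    have "cmod (sinh q - q) \<ge> cmod q" by (rule bdry_est[OF req])
    moreover have "sinh q - q = (w - 1) * q" using q0 by (simp add: wq field_simps)
    ultimately have "cmod (w - 1) * cmod q \<ge> cmod q" by (simp add: norm_mult)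
    hence "cmod (w - 1) \<ge> 1" using q0 by simp
    moreover have "cmod (1 - w) < 1" using w by (simp add: dist_norm)
    ultimately show ?thesis by (simp add: norm_minus_commute)
  qed
qed

lemma SS_sub: "SS \<subseteq> LL ` HH"
proof -
  define T where "T = SS \<inter> LL ` HH"
  have op: "openin (top_of_set SS) T" unfolding T_def by (rule openin_open_Int[OF open_LLHH])
  have cl: "closedin (top_of_set SS) T"
    unfolding closedin_limpt T_def using SS_closed_step by blast
  have ne: "T \<noteq> {}" using zero_SS zero_HH LL_0 unfolding T_def by force
  have "T = SS" using connected_SS op cl ne unfolding connected_clopen by blast
  thus ?thesis unfolding T_def by blast
qed



definition Linv :: "complex \<Rightarrow> complex" where
  "Linv = (SOME g. g holomorphic_on LL ` HH \<and> (\<forall>z\<in>HH. g (LL z) = z))"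

lemma Linv_props: "Linv holomorphic_on LL ` HH" "\<And>z. z \<in> HH \<Longrightarrow> Linv (LL z) = z"
proof -
  obtain g where "g holomorphic_on LL ` HH" "\<And>z. z \<in> HH \<Longrightarrow> g (LL z) = z"
    using holomorphic_has_inverse[OF LL_holo open_HH LL_inj] by metis
  hence "\<exists>g. g holomorphic_on LL ` HH \<and> (\<forall>z\<in>HH. g (LL z) = z)" by blast
  from someI_ex[OF this] show "Linv holomorphic_on LL ` HH" "\<And>z. z \<in> HH \<Longrightarrow> Linv (LL z) = z"
    unfolding Linv_def by blast+
qed

definition Rx :: "complex \<Rightarrow> complex" where "Rx \<xi> = Linv (Ln (1 - \<xi>))"

lemma ball01: "(\<xi>::complex) \<in> ball 0 1 \<Longrightarrow> 1 - \<xi> \<in> ball 1 1"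
  by (simp add: mem_ball dist_complex_def norm_minus_commute)

lemma Rx_props:
  assumes "\<xi> \<in> ball 0 1"
  shows "Rx \<xi> \<in> HH" "LL (Rx \<xi>) = Ln (1 - \<xi>)" "gc (Rx \<xi>) = 1 - \<xi>"
proof -
  have "Ln (1 - \<xi>) \<in> SS" unfolding SS_def using ball01[OF assms] by blast
  then obtain z where z: "z \<in> HH" "Ln (1 - \<xi>) = LL z" using SS_sub by blast
  have Rz: "Rx \<xi> = z" unfolding Rx_def z(2) using Linv_props(2)[OF z(1)] .
  show "Rx \<xi> \<in> HH" "LL (Rx \<xi>) = Ln (1 - \<xi>)" using Rz z by auto
  have "1 - \<xi> \<noteq> 0" using ball11_Re[OF ball01[OF assms]] by auto
  moreover have "gc (Rx \<xi>) = exp (Ln (1 - \<xi>))" by (simp add: gc_def Rz z(2))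
  ultimately show "gc (Rx \<xi>) = 1 - \<xi>" by simp
qed

lemma Rx_holo: "Rx holomorphic_on ball 0 1"
proof -
  have "(Linv \<circ> (\<lambda>\<xi>. Ln (1 - \<xi>))) holomorphic_on ball 0 1"
  proof (rule holomorphic_on_compose_gen[OF _ Linv_props(1)])
    show "(\<lambda>\<xi>. Ln (1 - \<xi>)) holomorphic_on ball 0 1"
    proof (intro holomorphic_intros ballI)
      fix \<xi> :: complex assume "\<xi> \<in> ball 0 1"
      hence "Re (1 - \<xi>) > 0" using ball11_Re[OF ball01] by blast
      thus "1 - \<xi> \<notin> \<real>\<^sub>\<le>\<^sub>0" by (auto simp: complex_nonpos_Reals_iff)
    qed
    show "(\<lambda>\<xi>. Ln (1 - \<xi>)) ` ball 0 1 \<subseteq> LL ` HH"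
      using SS_sub ball01 unfolding SS_def by blast
  qed
  thus ?thesis by (simp add: Rx_def[abs_def] o_def)
qed

lemma Rx_0: "Rx 0 = 0"
  unfolding Rx_def using Linv_props(2)[OF zero_HH] LL_0 by simp

definition gd :: "complex \<Rightarrow> complex" where "gd = deriv gc"
definition Cc :: "complex \<Rightarrow> complex" where "Cc r = gc r + 2 * r * gd r"
definition Hc :: "complex \<Rightarrow> complex" where "Hc r = 2 - 2 * Cc r + r * gc r"
definition Fc :: "complex \<Rightarrow> complex" where "Fc \<xi> = Hc (Rx \<xi>)"

lemma gd_holo: "gd holomorphic_on HH"
  unfolding gd_def by (intro holomorphic_deriv gc_holo open_HH)

lemma Hc_holo: "Hc holomorphic_on HH"
  unfolding Hc_def Cc_def by (intro holomorphic_intros gc_holo gd_holo)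

lemma Fc_holo: "Fc holomorphic_on ball 0 1"
proof -
  have "(Hc \<circ> Rx) holomorphic_on ball 0 1"
    by (rule holomorphic_on_compose_gen[OF Rx_holo Hc_holo]) (use Rx_props(1) in blast)
  thus ?thesis by (simp add: Fc_def[abs_def] o_def)
qed

lemma gd_val: "r \<in> HH \<Longrightarrow> gd r = gc r * LLd r"
  unfolding gd_def by (rule DERIV_imp_deriv[OF gc_deriv])

lemma Cc_0: "Cc 0 = 1" by (simp add: Cc_def gc_0)

lemma Fc_0: "Fc 0 = 0" by (simp add: Fc_def Rx_0 Hc_def Cc_0)

lemma Hc_deriv0: "(Hc has_field_derivative 0) (at 0)"
proof -
  have g: "(gc has_field_derivative gd 0) (at 0)"
    unfolding gd_def by (rule holomorphic_derivI[OF gc_holo open_HH zero_HH])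
  have d: "(gd has_field_derivative deriv gd 0) (at 0)"
    by (rule holomorphic_derivI[OF gd_holo open_HH zero_HH])
  have "(Hc has_field_derivative (- 2 * (gd 0 + 2 * gd 0 + 2 * 0 * deriv gd 0) + (gc 0 + 0 * gd 0))) (at 0)"
    unfolding Hc_def Cc_def
    by (rule derivative_eq_intros g d refl | simp)+
  moreover have "gd 0 = 1/6" using gd_val[OF zero_HH] gc_0 LLd_0 by simp
  ultimately show ?thesis using gc_0 by simp
qed

lemma Fc_deriv0: "deriv Fc 0 = 0"
proof -
  have r: "(Rx has_field_derivative deriv Rx 0) (at 0)"
    by (rule holomorphic_derivI[OF Rx_holo]) auto
  have h: "(Hc has_field_derivative 0) (at (Rx 0))" using Hc_deriv0 by (simp add: Rx_0)
  have "((Hc \<circ> Rx) has_field_derivative 0 * deriv Rx 0) (at 0)"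
    by (rule DERIV_chain[OF h r])
  hence "(Fc has_field_derivative 0) (at 0)" by (simp add: Fc_def[abs_def] o_def)
  thus ?thesis by (rule DERIV_imp_deriv)
qed



lemma sinh_ofr: "sinh (complex_of_real x) = complex_of_real (sinh x)"
  by (rule complex_eqI) (simp_all add: sinh_Re_Im)
lemma cosh_ofr: "cosh (complex_of_real x) = complex_of_real (cosh x)"
  by (rule complex_eqI) (simp_all add: cosh_Re_Im)
lemma sinh_ii: "sinh (\<i> * complex_of_real x) = \<i> * complex_of_real (sin x)"
  by (rule complex_eqI) (simp_all add: sinh_Re_Im)
lemma cosh_ii: "cosh (\<i> * complex_of_real x) = complex_of_real (cos x)"
  by (rule complex_eqI) (simp_all add: cosh_Re_Im)

lemma LL_cnj: assumes z: "z \<in> HH" shows "LL (cnj z) = cnj (LL z)"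
proof -
  have zc: "cnj z \<in> HH" using z by (simp add: HH_def)
  have "ell k (cnj z) = cnj (ell k z)" for k
  proof -
    have nn: "1 + z / complex_of_real (ck k) \<notin> \<real>\<^sub>\<le>\<^sub>0"
      using HH_Re[OF z, of k] by (auto simp: complex_nonpos_Reals_iff)
    have "cnj (1 + z / complex_of_real (ck k)) = 1 + cnj z / complex_of_real (ck k)" by simp
    thus ?thesis unfolding ell_def using cnj_Ln[OF nn] by simp
  qed
  moreover have "(\<lambda>k. cnj (ell k z)) sums cnj (LL z)"
    using LL_props(1)[OF z] by (simp add: sums_cnj)
  ultimately have "(\<lambda>k. ell k (cnj z)) sums cnj (LL z)" by simp
  moreover have "(\<lambda>k. ell k (cnj z)) sums LL (cnj z)" by (rule LL_props(1)[OF zc])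
  ultimately show ?thesis using sums_unique2 by blast
qed

lemma ofr_HH: "r > - (pi^2) \<Longrightarrow> complex_of_real r \<in> HH" by (simp add: HH_def)

lemma LL_real: assumes "r > - (pi^2)"
  shows "LL (complex_of_real r) = complex_of_real (Re (LL (complex_of_real r)))"
proof -
  have "cnj (LL (complex_of_real r)) = LL (complex_of_real r)"
    using LL_cnj[OF ofr_HH[OF assms]] by simp
  hence "Im (LL (complex_of_real r)) = 0" by (metis cnj.sel(2) neg_equal_zero)
  thus ?thesis by (simp add: complex_eq_iff)
qed

lemma gc_real: assumes r: "r > - (pi^2)"
  shows "gc (complex_of_real r) = complex_of_real (gfun r)"
proof (cases "r > 0")
  case True
  define z where "z = complex_of_real (sqrt r)"
  have z2: "z^2 = complex_of_real r" using True by (simp add: z_def flip: of_real_power)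
  have z0: "z \<noteq> 0" using True by (simp add: z_def)
  have "gc (z^2) = sinh z / z" using gc_q[of z] z2 ofr_HH[OF r] z0 by simp
  hence "gc (complex_of_real r) = sinh z / z" by (simp only: z2)
  thus ?thesis using True by (simp add: z_def sinh_ofr gfun_def)
next
  case False
  show ?thesis
  proof (cases "r = 0")
    case True thus ?thesis by (simp add: gc_0 gfun_def)
  next
    case False
    hence rn: "r < 0" using \<open>\<not> r > 0\<close> by simp
    define z where "z = \<i> * complex_of_real (sqrt (- r))"
    have z2: "z^2 = complex_of_real r" using rn
      by (simp add: z_def power_mult_distrib flip: of_real_power)
    have z0: "z \<noteq> 0" using rn by (simp add: z_def)
    have "gc (z^2) = sinh z / z" using gc_q[of z] z2 ofr_HH[OF r] z0 by simp
    hence "gc (complex_of_real r) = sinh z / z" by (simp only: z2)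
    thus ?thesis using rn by (simp add: z_def sinh_ii gfun_def)
  qed
qed

lemma Cc_q:
  assumes z0: "z \<noteq> 0" and zH: "z^2 \<in> HH"
  shows "Cc (z^2) = cosh z"
proof -
  define U where "U = {w. w \<noteq> 0} \<inter> (\<lambda>w::complex. w^2) -` HH"
  have oU: "open U" unfolding U_def
    by (intro open_Int continuous_open_vimage open_HH continuous_intros)
       (auto simp: open_Collect_neq)
  have zU: "z \<in> U" using z0 zH by (simp add: U_def)
  have d1: "((\<lambda>w. gc (w^2)) has_field_derivative gd (z^2) * (2 * z)) (at z)"
  proof (rule DERIV_chain2[of gc])
    show "(gc has_field_derivative gd (z^2)) (at (z^2))"
      unfolding gd_def by (rule holomorphic_derivI[OF gc_holo open_HH zH])
    show "((\<lambda>w. w^2) has_field_derivative 2 * z) (at z)"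
      by (auto intro!: derivative_eq_intros)
  qed
  have d2: "((\<lambda>w. sinh w / w) has_field_derivative (cosh z * z - sinh z) / z^2) (at z)"
    using z0 by (auto intro!: derivative_eq_intros simp: power2_eq_square)
  have "((\<lambda>w. sinh w / w) has_field_derivative gd (z^2) * (2 * z)) (at z)"
  proof (rule has_field_derivative_transform_within_open[OF d1 oU zU])
    fix w assume "w \<in> U"
    thus "gc (w^2) = sinh w / w" using gc_q[of w] by (simp add: U_def)
  qed
  hence e: "gd (z^2) * (2 * z) = (cosh z * z - sinh z) / z^2"
    using d2 DERIV_unique by blast
  have "Cc (z^2) = sinh z / z + z * (gd (z^2) * (2 * z))"
    using gc_q[OF zH] z0 by (simp add: Cc_def algebra_simps power2_eq_square)
  also have "\<dots> = sinh z / z + z * ((cosh z * z - sinh z) / z^2)" by (simp only: e)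
  also have "\<dots> = cosh z" using z0 by (simp add: field_simps power2_eq_square)
  finally show ?thesis .
qed

definition Cr :: "real \<Rightarrow> real" where
  "Cr r = (if r > 0 then cosh (sqrt r) else if r = 0 then 1 else cos (sqrt (- r)))"

lemma Cc_real: assumes r: "r > - (pi^2)"
  shows "Cc (complex_of_real r) = complex_of_real (Cr r)"
proof (cases "r > 0")
  case True
  define z where "z = complex_of_real (sqrt r)"
  have z2: "z^2 = complex_of_real r" using True by (simp add: z_def flip: of_real_power)
  have z0: "z \<noteq> 0" using True by (simp add: z_def)
  have "Cc (z^2) = cosh z" using Cc_q[OF z0] z2 ofr_HH[OF r] by simp
  hence "Cc (complex_of_real r) = cosh z" by (simp only: z2)
  thus ?thesis using True by (simp add: z_def cosh_ofr Cr_def)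
next
  case False
  show ?thesis
  proof (cases "r = 0")
    case True thus ?thesis by (simp add: Cc_0 Cr_def)
  next
    case False
    hence rn: "r < 0" using \<open>\<not> r > 0\<close> by simp
    define z where "z = \<i> * complex_of_real (sqrt (- r))"
    have z2: "z^2 = complex_of_real r" using rn
      by (simp add: z_def power_mult_distrib flip: of_real_power)
    have z0: "z \<noteq> 0" using rn by (simp add: z_def)
    have "Cc (z^2) = cosh z" using Cc_q[OF z0] z2 ofr_HH[OF r] by simp
    hence "Cc (complex_of_real r) = cosh z" by (simp only: z2)
    thus ?thesis using rn by (simp add: z_def cosh_ii Cr_def)
  qed
qed



lemma Rx_real:
  fixes \<xi> :: real assumes x: "\<bar>\<xi>\<bar> < 1"
  shows "Rx (complex_of_real \<xi>) = complex_of_real (Re (Rx (complex_of_real \<xi>)))"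
        "Re (Rx (complex_of_real \<xi>)) > - (pi^2)"
proof -
  have b: "complex_of_real \<xi> \<in> ball 0 1" using x by simp
  define z where "z = Rx (complex_of_real \<xi>)"
  have zH: "z \<in> HH" using Rx_props(1)[OF b] by (simp add: z_def)
  have "LL z = Ln (complex_of_real (1 - \<xi>))" using Rx_props(2)[OF b] by (simp add: z_def)
  also have "\<dots> = complex_of_real (ln (1 - \<xi>))" using x by (intro Ln_of_real) auto
  finally have Lz: "LL z = complex_of_real (ln (1 - \<xi>))" .
  have czH: "cnj z \<in> HH" using zH by (simp add: HH_def)
  have "LL (cnj z) = LL z" using LL_cnj[OF zH] Lz by simp
  hence "cnj z = z" using LL_inj zH czH by (meson inj_onD)
  hence "Im z = 0" by (metis cnj.sel(2) neg_equal_zero)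
  thus "Rx (complex_of_real \<xi>) = complex_of_real (Re (Rx (complex_of_real \<xi>)))"
    by (simp add: z_def complex_eq_iff)
  show "Re (Rx (complex_of_real \<xi>)) > - (pi^2)" using zH by (simp add: z_def HH_def)
qed

lemma ginv_val:
  fixes \<xi> :: real assumes x: "\<bar>\<xi>\<bar> < 1"
  shows "ginv (1 - \<xi>) = Re (Rx (complex_of_real \<xi>))"
proof -
  define r0 where "r0 = Re (Rx (complex_of_real \<xi>))"
  have b: "complex_of_real \<xi> \<in> ball 0 1" using x by simp
  have r0H: "r0 > - (pi^2)" using Rx_real(2)[OF x] by (simp add: r0_def)
  have gr0: "gc (complex_of_real r0) = complex_of_real (1 - \<xi>)"
    using Rx_props(3)[OF b] Rx_real(1)[OF x] by (simp add: r0_def)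
  have "complex_of_real (gfun r0) = complex_of_real (1 - \<xi>)" by (metis gr0 gc_real[OF r0H])
  hence g0: "gfun r0 = 1 - \<xi>" by (simp only: of_real_eq_iff)
  show ?thesis unfolding ginv_def r0_def[symmetric]
  proof (rule the_equality)
    show "- (pi^2) < r0 \<and> gfun r0 = 1 - \<xi>" using r0H g0 by simp
  next
    fix r1 assume h: "- (pi^2) < r1 \<and> gfun r1 = 1 - \<xi>"
    hence r1H: "r1 > - (pi^2)" by simp
    have "gc (complex_of_real r1) = gc (complex_of_real r0)"
      using gc_real[OF r1H] gc_real[OF r0H] h g0 by simp
    hence "exp (LL (complex_of_real r1)) = exp (LL (complex_of_real r0))" by (simp add: gc_def)
    hence "exp (complex_of_real (Re (LL (complex_of_real r1)))) = exp (complex_of_real (Re (LL (complex_of_real r0))))"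
      using LL_real[OF r1H] LL_real[OF r0H] by simp
    hence "Re (LL (complex_of_real r1)) = Re (LL (complex_of_real r0))"
      by (simp only: exp_of_real of_real_eq_iff exp_inj_iff)
    hence "LL (complex_of_real r1) = LL (complex_of_real r0)"
      using LL_real[OF r1H] LL_real[OF r0H] by metis
    hence "complex_of_real r1 = complex_of_real r0"
      using LL_inj ofr_HH[OF r1H] ofr_HH[OF r0H] by (meson inj_onD)
    thus "r1 = r0" by simp
  qed
qed

lemma RL:
  fixes r y :: real
  assumes r: "r > - (pi^2)" and y: "gfun r = y" and y0: "y > 0"
  shows "sgn (4 * r + pi^2) * sqrt ((1/y)^2 + r) = (1/y) * Cr r"
proof -
  consider "r > 0" | "r = 0" | "r < 0" by linarith
  thus ?thesis
  proof cases
    case 1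
    define s where "s = sqrt r"
    have s0: "s > 0" using 1 by (simp add: s_def)
    have rs: "r = s^2" using 1 by (simp add: s_def)
    have ys: "y = sinh s / s" using y 1 by (simp add: gfun_def s_def)
    have sh: "sinh s > 0" using s0 by simp
    have ch: "cosh s > 0" using cosh_real_ge_1[of s] by simp
    have "(1/y)^2 + r = (s * cosh s / sinh s)^2"
      using s0 sh cosh_square_eq[of s] by (simp add: ys rs field_simps power2_eq_square)
    hence "sqrt ((1/y)^2 + r) = s * cosh s / sinh s" using s0 sh ch by simp
    moreover have "4 * r + pi^2 > 0" using 1 by (simp add: add_pos_nonneg)
    hence "sgn (4 * r + pi^2) = 1" by simp
    ultimately show ?thesis using 1 by (simp add: ys Cr_def s_def)
  next
    case 2
    thus ?thesis using y by (simp add: gfun_def Cr_def)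
  next
    case 3
    define s where "s = sqrt (- r)"
    have s0: "s > 0" using 3 by (simp add: s_def)
    have rs: "r = - (s^2)" using 3 by (simp add: s_def)
    have spi: "s < pi"
    proof (rule ccontr)
      assume "\<not> s < pi"
      hence "s^2 \<ge> pi^2" using pi_gt_zero by (intro power_mono) auto
      thus False using r rs by simp
    qed
    have ys: "y = sin s / s" using y 3 by (simp add: gfun_def s_def)
    have sn: "sin s > 0" using s0 spi by (intro sin_gt_zero)
    have "(1/y)^2 + r = s^2 / (sin s)^2 - s^2" by (simp add: ys rs power_divide)
    also have "\<dots> = s^2 * (1 - (sin s)^2) / (sin s)^2" using sn by (simp add: field_simps)
    also have "\<dots> = (s * cos s / sin s)^2" by (simp add: cos_squared_eq power_mult_distrib power_divide)
    finally have "(1/y)^2 + r = (s * cos s / sin s)^2" .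
    hence sq: "sqrt ((1/y)^2 + r) = s * \<bar>cos s\<bar> / sin s" using s0 sn
      by (simp add: abs_mult abs_divide)
    have sg: "sgn (4 * r + pi^2) * \<bar>cos s\<bar> = cos s"
    proof -
      consider "s < pi/2" | "s = pi/2" | "s > pi/2" by linarith
      thus ?thesis
      proof cases
        case 1
        hence "(2 * s)^2 < pi^2" using s0 by (intro power_strict_mono) auto
        hence "4 * r + pi^2 > 0" using rs by (simp add: power_mult_distrib)
        moreover have "cos s > 0" using 1 s0 by (intro cos_gt_zero_pi) auto
        ultimately show ?thesis by simp
      next
        case 2
        hence "cos s = 0" using cos_pi_half by (simp only:)
        thus ?thesis by simp
      next
        case 3
        hence "(2 * s)^2 > pi^2" using pi_gt_zero by (intro power_strict_mono) auto
        hence "4 * r + pi^2 < 0" using rs by (simp add: power_mult_distrib)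
        moreover have "cos s < 0" using 3 spi by (intro cos_lt_zero_pi) auto
        ultimately show ?thesis by simp
      qed
    qed
    have "sgn (4 * r + pi^2) * sqrt ((1/y)^2 + r) = (s / sin s) * (sgn (4 * r + pi^2) * \<bar>cos s\<bar>)"
      by (simp add: sq)
    also have "\<dots> = (1/y) * Cr r"
    proof -
      have Crs: "Cr r = cos s" using 3 by (simp add: Cr_def s_def)
      show ?thesis by (simp only: sg ys Crs) simp
    qed
    finally show ?thesis .
  qed
qed



lemma Fc_real:
  fixes \<xi> :: real assumes x: "\<bar>\<xi>\<bar> < 1"
  shows "Fc (complex_of_real \<xi>) = complex_of_real (Ffun \<xi>)"
proof -
  define r0 where "r0 = Re (Rx (complex_of_real \<xi>))"
  define y where "y = 1 - \<xi>"
  have y0: "y > 0" using x by (simp add: y_def)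
  have b: "complex_of_real \<xi> \<in> ball 0 1" using x by simp
  have Rr: "Rx (complex_of_real \<xi>) = complex_of_real r0" using Rx_real(1)[OF x] by (simp add: r0_def)
  have r0H: "r0 > - (pi^2)" using Rx_real(2)[OF x] by (simp add: r0_def)
  have gr0: "gc (complex_of_real r0) = complex_of_real y"
    using Rx_props(3)[OF b] Rr by (simp add: y_def)
  have "complex_of_real (gfun r0) = complex_of_real y" by (metis gr0 gc_real[OF r0H])
  hence g0: "gfun r0 = y" by (simp only: of_real_eq_iff)
  have gi: "ginv y = r0" using ginv_val[OF x] by (simp add: r0_def y_def)
  have RL0: "sgn (4 * r0 + pi^2) * sqrt ((1/y)^2 + r0) = (1/y) * Cr r0"
    by (rule RL[OF r0H g0 y0])
  have "Gfun (1 / y) = 2 * (1/y) - 2 * (sgn (4 * r0 + pi^2) * sqrt ((1/y)^2 + r0)) + r0"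
    by (simp add: Gfun_def gi mult.assoc)
  also have "\<dots> = 2 * (1/y) - 2 * ((1/y) * Cr r0) + r0" by (simp only: RL0)
  finally have G: "Gfun (1 / y) = 2 * (1/y) - 2 * ((1/y) * Cr r0) + r0" .
  have "Ffun \<xi> = y * Gfun (1 / y)" by (simp add: Ffun_def y_def)
  also have "\<dots> = 2 - 2 * Cr r0 + r0 * y" using y0 by (simp add: G field_simps)
  finally have F: "Ffun \<xi> = 2 - 2 * Cr r0 + r0 * y" .
  have "Fc (complex_of_real \<xi>) = Hc (complex_of_real r0)" by (simp add: Fc_def Rr)
  also have "\<dots> = 2 - 2 * complex_of_real (Cr r0) + complex_of_real r0 * complex_of_real y"
    by (simp add: Hc_def Cc_real[OF r0H] gr0)
  also have "\<dots> = complex_of_real (Ffun \<xi>)" by (simp add: F)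
  finally show ?thesis .
qed

lemma RD:
  fixes f :: "complex \<Rightarrow> complex" and F :: "real \<Rightarrow> real"
  assumes hol: "f holomorphic_on ball 0 1"
    and eq: "\<And>x. \<bar>x\<bar> < 1 \<Longrightarrow> f (complex_of_real x) = complex_of_real (F x)"
  shows "\<bar>x\<bar> < 1 \<Longrightarrow> (deriv ^^ n) F x = Re ((deriv ^^ n) f (complex_of_real x))"
proof (induction n arbitrary: x)
  case 0
  thus ?case using eq by simp
next
  case (Suc n)
  define I where "I = {-1<..<(1::real)}"
  have oI: "open I" by (simp add: I_def)
  have xI: "x \<in> I" using Suc.prems by (auto simp: I_def)
  define h where "h = (deriv ^^ n) f"
  have hh: "h holomorphic_on ball 0 1" unfolding h_def by (intro holomorphic_higher_deriv hol) auto
  have xb: "complex_of_real x \<in> ball 0 1" using Suc.prems by simp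
  have hd: "(h has_field_derivative deriv h (complex_of_real x)) (at (complex_of_real x))"
    by (rule holomorphic_derivI[OF hh open_ball xb])
  have "((\<lambda>t. Re (h (complex_of_real t))) has_real_derivative Re (deriv h (complex_of_real x))) (at x)"
    by (rule has_field_derivative_Re[OF has_vector_derivative_real_field[OF hd]])
  hence "((deriv ^^ n) F has_real_derivative Re (deriv h (complex_of_real x))) (at x)"
  proof (rule has_field_derivative_transform_within_open[OF _ oI xI])
    fix t assume "t \<in> I"
    hence "\<bar>t\<bar> < 1" by (auto simp: I_def)
    thus "Re (h (complex_of_real t)) = (deriv ^^ n) F t" using Suc.IH by (simp add: h_def)
  qed
  hence "deriv ((deriv ^^ n) F) x = Re (deriv h (complex_of_real x))" by (rule DERIV_imp_deriv)
  thus ?case by (simp add: h_def)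
qed

lemma acoef_Re: "acoef n = Re ((deriv ^^ n) Fc 0) / fact n"
proof -
  have "(deriv ^^ n) Ffun 0 = Re ((deriv ^^ n) Fc (complex_of_real 0))"
    by (rule RD[OF Fc_holo Fc_real]) auto
  thus ?thesis by (simp add: acoef_def)
qed

lemma acoef_0: "acoef 0 = 0" by (simp add: acoef_Re Fc_0)
lemma acoef_1: "acoef 1 = 0" by (simp add: acoef_Re Fc_deriv0)

lemma series_real:
  fixes \<xi> :: real assumes x: "\<bar>\<xi>\<bar> < 1"
  shows "(\<lambda>n. acoef n * \<xi>^n) sums Ffun \<xi>"
proof -
  have "(\<lambda>n. (deriv ^^ n) Fc 0 / fact n * (complex_of_real \<xi> - 0)^n) sums Fc (complex_of_real \<xi>)"
    by (rule holomorphic_power_series[OF Fc_holo]) (use x in simp)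
  hence "(\<lambda>n. Re ((deriv ^^ n) Fc 0 / fact n * (complex_of_real \<xi> - 0)^n)) sums Re (Fc (complex_of_real \<xi>))"
    by (simp add: sums_complex_iff)
  moreover have "Re ((deriv ^^ n) Fc 0 / fact n * (complex_of_real \<xi> - 0)^n) = acoef n * \<xi>^n" for n
  proof -
    have "(deriv ^^ n) Fc 0 / fact n * (complex_of_real \<xi> - 0)^n
        = (\<xi>^n / fact n) *\<^sub>R (deriv ^^ n) Fc 0" by (simp add: scaleR_conv_of_real field_simps)
    hence "Re ((deriv ^^ n) Fc 0 / fact n * (complex_of_real \<xi> - 0)^n) = (\<xi>^n / fact n) * Re ((deriv ^^ n) Fc 0)"
      by (simp only: scaleR_complex.sel)
    thus ?thesis by (simp add: acoef_Re)
  qed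
  ultimately show ?thesis by (simp add: Fc_real[OF x])
qed

theorem theorem3p2:
  fixes \<eta> :: real
  assumes "\<eta> > 1"
  shows "(\<lambda>N. \<Sum>n=2..N. acoef n * (\<eta> - 1) ^ n / \<eta> ^ (n - 1)) \<longlonglongrightarrow> Gfun \<eta>"
proof -
  define \<xi> where "\<xi> = (\<eta> - 1) / \<eta>"
  have e0: "\<eta> > 0" using assms by simp
  have x0: "\<xi> > 0" "\<xi> < 1" using assms by (auto simp: \<xi>_def field_simps)
  hence x: "\<bar>\<xi>\<bar> < 1" by simp
  have s: "(\<lambda>n. acoef n * \<xi>^n) sums Ffun \<xi>" by (rule series_real[OF x])
  hence "(\<lambda>N. \<Sum>n<N. acoef n * \<xi>^n) \<longlonglongrightarrow> Ffun \<xi>" by (simp add: sums_def)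
  hence "(\<lambda>N. \<Sum>n<Suc N. acoef n * \<xi>^n) \<longlonglongrightarrow> Ffun \<xi>" by (rule LIMSEQ_Suc)
  hence l: "(\<lambda>N. \<eta> * (\<Sum>n<Suc N. acoef n * \<xi>^n)) \<longlonglongrightarrow> \<eta> * Ffun \<xi>"
    by (intro tendsto_intros)
  have fin: "\<eta> * Ffun \<xi> = Gfun \<eta>"
  proof -
    have "1 - \<xi> = 1 / \<eta>" using e0 by (simp add: \<xi>_def field_simps)
    thus ?thesis using e0 by (simp add: Ffun_def)
  qed
  have eqN: "(\<Sum>n=2..N. acoef n * (\<eta> - 1) ^ n / \<eta> ^ (n - 1)) = \<eta> * (\<Sum>n<Suc N. acoef n * \<xi>^n)" for N
  proof -
    have "(\<Sum>n<Suc N. acoef n * \<xi>^n) = (\<Sum>n=2..N. acoef n * \<xi>^n)"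
    proof (rule sum.mono_neutral_right)
      show "finite {..<Suc N}" by simp
      show "{2..N} \<subseteq> {..<Suc N}" by auto
      show "\<forall>i\<in>{..<Suc N} - {2..N}. acoef i * \<xi> ^ i = 0"
      proof
        fix i assume "i \<in> {..<Suc N} - {2..N}"
        hence "i = 0 \<or> i = 1" by auto
        thus "acoef i * \<xi> ^ i = 0" using acoef_0 acoef_1 by auto
      qed
    qed
    hence "\<eta> * (\<Sum>n<Suc N. acoef n * \<xi>^n) = (\<Sum>n=2..N. \<eta> * (acoef n * \<xi>^n))"
      by (simp add: sum_distrib_left)
    also have "\<dots> = (\<Sum>n=2..N. acoef n * (\<eta> - 1) ^ n / \<eta> ^ (n - 1))"
    proof (rule sum.cong[OF refl])
      fix n assume "n \<in> {2..N}"
      hence n: "n = Suc (n - 1)" by auto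
      have "\<eta> ^ n = \<eta> * \<eta> ^ (n - 1)" by (subst n) simp
      thus "\<eta> * (acoef n * \<xi>^n) = acoef n * (\<eta> - 1) ^ n / \<eta> ^ (n - 1)"
        using e0 by (simp add: \<xi>_def power_divide field_simps)
    qed
    finally show ?thesis by simp
  qed
  have "(\<lambda>N. \<Sum>n=2..N. acoef n * (\<eta> - 1) ^ n / \<eta> ^ (n - 1)) = (\<lambda>N. \<eta> * (\<Sum>n<Suc N. acoef n * \<xi>^n))"
    by (rule ext) (rule eqN)
  thus ?thesis using l fin by (simp only:)
qed

end
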